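(* Let $d\ge3$, $h\ge1$, $1\le n\le h$, and let $j_1\ne j_2$ be two vertices at distance $n$ from the root that have the same parent. Then the order of $\bar{\mathbf{x}}_{j_1}-\bar{\mathbf{x}}_{j_2}$ in $G(d,h)$ is $\theta(d,h+2-n)$, where $\theta(d,m):=\frac{(d-1)^m-1}{d-2}$.
   Context: Let $\mathcal{T}(d,h)$ be the rooted tree in which the root $0$ has $d$ children, every vertex at distance $1,\dots,h-1$ from the root has $d-1$ children, and the vertices at distance $h$ are leaves. Let $V$ be its vertex set, $A$ its adjacency matrix, $\Delta := dI-A$, and $\Lambda\subset\mathbb{Z}^V$ the lattice spanned by the rows of $\Delta$. Then $G(d,h):=\mathbb{Z}^V/\Lambda$; $\{\mathbf{x}_i:i\in V\}$ is the standard basis of $\mathbb{Z}^V$ and $\bar{\mathbf{v}}$ denotes the image of $\mathbf{v}\in\mathbb{Z}^V$ in $G(d,h)$. *)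

theory Defs
  imports Main
begin

text \<open>Vertices of T(d,h): a vertex is the list of child indices along the path from
the root (root = []).
The distance of a vertex from the root is its length; its parent is its butlast.\<close>

definition tree_V :: "nat \<Rightarrow> nat \<Rightarrow> nat list set" where
  "tree_V d h = {p. length p \<le> h \<and>
      (\<forall>i<length p. p ! i < (if i = 0 then d else d - 1))}"

definition tree_adj :: "nat list \<Rightarrow> nat list \<Rightarrow> bool" where
  "tree_adj u v \<longleftrightarrow> (u \<noteq> [] \<and> v = butlast u) \<or> (v \<noteq> [] \<and> u = butlast v)"

definition tree_Delta :: "nat \<Rightarrow> nat list \<Rightarrow> nat list \<Rightarrow> int" where
  "tree_Delta d i j = (if i = j then int d else 0) - (if tree_adj i j then 1 else 0)"

text \<open>Elements of Z^V are functions V \<Rightarrow> int, represented as functions vanishing off V.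
The lattice Lambda is the integer span of the rows of Delta.\<close>
definition tree_lattice :: "nat \<Rightarrow> nat \<Rightarrow> (nat list \<Rightarrow> int) set" where
  "tree_lattice d h = {w. \<exists>c :: nat list \<Rightarrow> int.
      w = (\<lambda>j. if j \<in> tree_V d h then (\<Sum>i\<in>tree_V d h. c i * tree_Delta d i j) else 0)}"

definition std_basis :: "nat list \<Rightarrow> nat list \<Rightarrow> int" where
  "std_basis i = (\<lambda>j. if j = i then 1 else 0)"

text \<open>Order of the class of v in G(d,h) = Z^V / Lambda: the least positive k with
k v in Lambda, and 0 if there is none (infinite order), as for group.ord.\<close>
definition order_in_G :: "nat \<Rightarrow> nat \<Rightarrow> (nat list \<Rightarrow> int) \<Rightarrow> nat" where
  "order_in_G d h v = (if \<exists>k::nat. 0 < k \<and> (\<lambda>j. int k * v j) \<in> tree_lattice d h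
     then (LEAST k::nat. 0 < k \<and> (\<lambda>j. int k * v j) \<in> tree_lattice d h) else 0)"

text \<open>theta(d,m) = ((d-1)^m - 1)/(d-2); the division is exact for d \<ge> 3.\<close>
definition theta :: "nat \<Rightarrow> nat \<Rightarrow> nat" where
  "theta d m = ((d - 1) ^ m - 1) div (d - 2)"

end

theory Submission imports Defs begin

definition bnd :: "nat \<Rightarrow> nat list \<Rightarrow> nat" where
  "bnd d u = (if u = [] then d else d - 1)"

lemma finite_V: "finite (tree_V d h)"
proof -
  have "tree_V d h \<subseteq> {xs. set xs \<subseteq> {..<d} \<and> length xs \<le> h}"
  proof
    fix p assume "p \<in> tree_V d h"
    then have L: "length p \<le> h" and B: "\<forall>i<length p. p ! i < (if i = 0 then d else d - 1)"
      by (auto simp: tree_V_def)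
    have "set p \<subseteq> {..<d}"
    proof
      fix x assume "x \<in> set p"
      then obtain i where "i < length p" "p ! i = x" by (auto simp: in_set_conv_nth)
      with B show "x \<in> {..<d}" by (cases "i = 0") fastforce+
    qed
    with L show "p \<in> {xs. set xs \<subseteq> {..<d} \<and> length xs \<le> h}" by simp
  qed
  then show ?thesis using finite_lists_length_le[of "{..<d}" h] finite_subset by blast
qed

lemma nil_V: "[] \<in> tree_V d h"
  by (simp add: tree_V_def)

lemma butlast_V: "j \<in> tree_V d h \<Longrightarrow> butlast j \<in> tree_V d h"
  by (auto simp: tree_V_def nth_butlast)

lemma snoc_V: "(j @ [a] \<in> tree_V d h) \<longleftrightarrow>
    j \<in> tree_V d h \<and> length j < h \<and> a < bnd d j"
proof
  assume A: "j @ [a] \<in> tree_V d h"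
  then have "butlast (j @ [a]) \<in> tree_V d h" by (rule butlast_V)
  moreover have "(j @ [a]) ! length j < (if length j = 0 then d else d - 1)"
    using A by (auto simp: tree_V_def)
  ultimately show "j \<in> tree_V d h \<and> length j < h \<and> a < bnd d j"
    using A by (auto simp: tree_V_def bnd_def)
next
  assume "j \<in> tree_V d h \<and> length j < h \<and> a < bnd d j"
  then show "j @ [a] \<in> tree_V d h"
    by (auto simp: tree_V_def bnd_def nth_append less_Suc_eq)
qed

lemma adj_irrefl: "\<not> tree_adj u u"
  by (auto simp: tree_adj_def) (metis length_butlast diff_less length_greater_0_conv less_irrefl zero_less_one)+

lemma adj_set:
  assumes "j \<in> tree_V d h"
  shows "{i \<in> tree_V d h. tree_adj i j} =
    (if j \<noteq> [] then {butlast j} else {}) \<union>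
    (if length j < h then (\<lambda>a. j @ [a]) ` {..<bnd d j} else {})"
  (is "?L = ?P \<union> ?C")
proof
  show "?L \<subseteq> ?P \<union> ?C"
  proof
    fix i assume "i \<in> ?L"
    then have iV: "i \<in> tree_V d h" and ad: "tree_adj i j" by auto
    show "i \<in> ?P \<union> ?C"
    proof (cases "j \<noteq> [] \<and> i = butlast j")
      case True then show ?thesis by simp
    next
      case False
      with ad have "i \<noteq> []" "j = butlast i" by (auto simp: tree_adj_def)
      then have ij: "i = j @ [last i]" by simp
      with iV have "length j < h \<and> last i < bnd d j" using snoc_V by metis
      with ij show ?thesis by auto
    qed
  qed
next
  show "?P \<union> ?C \<subseteq> ?L"
  proof
    fix i assume "i \<in> ?P \<union> ?C"
    then consider "j \<noteq> []" "i = butlast j" | a where "length j < h" "a < bnd d j" "i = j @ [a]"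
      by (auto split: if_splits)
    then show "i \<in> ?L"
    proof cases
      case 1 then show ?thesis using assms butlast_V by (auto simp: tree_adj_def)
    next
      case 2
      then have "i \<in> tree_V d h" using assms snoc_V by metis
      with 2 show ?thesis by (auto simp: tree_adj_def)
    qed
  qed
qed

lemma Delta_sum:
  assumes "j \<in> tree_V d h"
  shows "(\<Sum>i\<in>tree_V d h. f i * tree_Delta d i j) =
    int d * f j - (if j \<noteq> [] then f (butlast j) else 0)
      - (if length j < h then (\<Sum>a<bnd d j. f (j @ [a])) else 0)"
proof -
  let ?V = "tree_V d h"
  have "(\<Sum>i\<in>?V. f i * tree_Delta d i j) =
     (\<Sum>i\<in>?V. f i * (if i = j then int d else 0)) - (\<Sum>i\<in>?V. f i * (if tree_adj i j then 1 else 0))"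
    by (simp add: tree_Delta_def right_diff_distrib sum_subtractf)
  also have "(\<Sum>i\<in>?V. f i * (if i = j then int d else 0)) = int d * f j"
    using assms finite_V by (simp add: if_distrib cong: if_cong)
  also have "(\<Sum>i\<in>?V. f i * (if tree_adj i j then 1 else 0)) = (\<Sum>i\<in>{i \<in> ?V. tree_adj i j}. f i)"
    using finite_V by (simp add: sum.inter_filter[symmetric] if_distrib cong: if_cong)
  also have "\<dots> = (\<Sum>i\<in>(if j \<noteq> [] then {butlast j} else {}). f i) +
      (\<Sum>i\<in>(if length j < h then (\<lambda>a. j @ [a]) ` {..<bnd d j} else {}). f i)"
    unfolding adj_set[OF assms]
    by (rule sum.union_disjoint) (auto dest: arg_cong[of _ _ length])
  also have "(\<Sum>i\<in>(if length j < h then (\<lambda>a. j @ [a]) ` {..<bnd d j} else {}). f i)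
     = (if length j < h then (\<Sum>a<bnd d j. f (j @ [a])) else 0)"
    by (simp add: sum.reindex inj_on_def)
  finally show ?thesis by simp
qed

lemma kernel:
  fixes c :: "nat list \<Rightarrow> int"
  assumes d: "d \<ge> 3" and K: "\<forall>j\<in>tree_V d h. (\<Sum>i\<in>tree_V d h. c i * tree_Delta d i j) = 0"
    and uV: "u \<in> tree_V d h"
  shows "c u = 0"
proof (rule ccontr)
  assume cu: "c u \<noteq> 0"
  let ?V = "tree_V d h"
  define M where "M = Max ((\<lambda>w. \<bar>c w\<bar>) ` ?V)"
  have fin: "finite ?V" by (rule finite_V)
  have Mge: "\<And>w. w \<in> ?V \<Longrightarrow> \<bar>c w\<bar> \<le> M" unfolding M_def using fin by auto
  have Mpos: "M > 0" using Mge[OF uV] cu by simp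
  define A where "A = {w \<in> ?V. \<bar>c w\<bar> = M}"
  have "M \<in> (\<lambda>w. \<bar>c w\<bar>) ` ?V" unfolding M_def
    using fin nil_V by (intro Max_in) auto
  then have Ane: "A \<noteq> {}" unfolding A_def by auto
  have Afin: "finite A" unfolding A_def using fin by simp
  define L where "L = Max (length ` A)"
  obtain w where wA: "w \<in> A" and wL: "length w = L"
  proof -
    have "L \<in> length ` A" unfolding L_def using Afin Ane by (intro Max_in) auto
    then show ?thesis using that by auto
  qed
  have Lmax: "\<And>x. x \<in> A \<Longrightarrow> length x \<le> L" unfolding L_def using Afin by auto
  have wV: "w \<in> ?V" and cw: "\<bar>c w\<bar> = M" using wA by (auto simp: A_def)
  have eq: "int d * c w = (if w \<noteq> [] then c (butlast w) else 0)
      + (if length w < h then (\<Sum>a<bnd d w. c (w @ [a])) else 0)"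
    using K wV Delta_sum[OF wV, of c] by simp
  have P: "\<bar>(if w \<noteq> [] then c (butlast w) else 0)\<bar> \<le> (if w \<noteq> [] then M else 0)"
    using Mge butlast_V wV Mpos by auto
  have "\<bar>int d * c w\<bar> = int d * M" using cw by (simp add: abs_mult)
  show False
  proof (cases "length w < h")
    case True
    have ch: "\<And>a. a < bnd d w \<Longrightarrow> \<bar>c (w @ [a])\<bar> \<le> M - 1"
    proof -
      fix a assume "a < bnd d w"
      then have V: "w @ [a] \<in> ?V" using snoc_V wV True by blast
      have "w @ [a] \<notin> A" using Lmax wL by fastforce
      then have "\<bar>c (w @ [a])\<bar> \<noteq> M" using V by (auto simp: A_def)
      with Mge[OF V] show "\<bar>c (w @ [a])\<bar> \<le> M - 1" by simp
    qed
    have "\<bar>\<Sum>a<bnd d w. c (w @ [a])\<bar> \<le> (\<Sum>a<bnd d w. \<bar>c (w @ [a])\<bar>)" by (rule sum_abs)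
    also have "\<dots> \<le> (\<Sum>a<bnd d w. M - 1)" apply (rule sum_mono) using ch by auto
    finally have S: "\<bar>\<Sum>a<bnd d w. c (w @ [a])\<bar> \<le> int (bnd d w) * (M - 1)" by simp
    have "int d * M = \<bar>int d * c w\<bar>" using cw by (simp add: abs_mult)
    also have "\<dots> = \<bar>(if w \<noteq> [] then c (butlast w) else 0) + (\<Sum>a<bnd d w. c (w @ [a]))\<bar>"
      using eq True by simp
    also have "\<dots> \<le> \<bar>(if w \<noteq> [] then c (butlast w) else 0)\<bar> + \<bar>\<Sum>a<bnd d w. c (w @ [a])\<bar>"
      by (rule abs_triangle_ineq)
    also have "\<dots> \<le> (if w \<noteq> [] then M else 0) + int (bnd d w) * (M - 1)"
      using P S by (rule add_mono)
    finally have F: "int d * M \<le> (if w \<noteq> [] then M else 0) + int (bnd d w) * (M - 1)" .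
    show False
    proof (cases "w = []")
      case True
      with F have "int d * M \<le> int d * (M - 1)" by (simp add: bnd_def)
      then show False by (simp add: algebra_simps) (use d in linarith)
    next
      case False
      have "int (d - 1) = int d - 1" using d by simp
      with F False have "int d * M \<le> M + (int d - 1) * (M - 1)" by (simp add: bnd_def)
      then show False using d by (simp add: algebra_simps)
    qed
  next
    case False
    have "int d * M = \<bar>int d * c w\<bar>" using cw by (simp add: abs_mult)
    also have "\<dots> = \<bar>(if w \<noteq> [] then c (butlast w) else 0)\<bar>"
      using eq False by simp
    also have "\<dots> \<le> M" using P Mpos by (auto split: if_splits)
    finally have "int d * M \<le> M" .
    moreover have "3 * M \<le> int d * M" using d Mpos by (intro mult_right_mono) auto
    ultimately show False using Mpos by linarith
  qed
qed

fun th :: "nat \<Rightarrow> nat \<Rightarrow> nat" where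
  "th d 0 = 0"
| "th d (Suc k) = (d - 1) * th d k + 1"

lemma th_pow: "(e + 1) ^ k = e * th (e + 2) k + 1"
  by (induction k) (simp_all add: algebra_simps)

lemma theta_th: assumes "d \<ge> 3" shows "theta d k = th d k"
proof -
  define e where "e = d - 2"
  have e: "d = e + 2" "e > 0" using assms by (simp_all add: e_def)
  have "theta d k = ((e + 1) ^ k - 1) div e" using e by (simp add: theta_def)
  also have "\<dots> = th d k" using e th_pow[of e k] by simp
  finally show ?thesis .
qed

lemma th_rec_int: "d \<ge> 1 \<Longrightarrow> int (th d (Suc k)) = (int d - 1) * int (th d k) + 1"
  by (simp add: of_nat_diff)

definition fJ :: "nat \<Rightarrow> nat \<Rightarrow> nat \<Rightarrow> nat list \<Rightarrow> nat list \<Rightarrow> int" where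
  "fJ d h n J u = (if take n u = J then int (th d (h + 1 - length u)) else 0)"

lemma branch:
  assumes d: "d \<ge> 3" and JV: "J \<in> tree_V d h" and lJ: "length J = n" and n1: "1 \<le> n"
    and nh: "n \<le> h" and jV: "j \<in> tree_V d h"
  shows "(\<Sum>i\<in>tree_V d h. fJ d h n J i * tree_Delta d i j) =
    (if j = J then int (th d (h + 2 - n)) else 0) - (if j = butlast J then int (th d (h + 1 - n)) else 0)"
proof -
  have jh: "length j \<le> h" using jV by (simp add: tree_V_def)
  have S: "(\<Sum>i\<in>tree_V d h. fJ d h n J i * tree_Delta d i j) =
    int d * fJ d h n J j - (if j \<noteq> [] then fJ d h n J (butlast j) else 0)
      - (if length j < h then (\<Sum>a<bnd d j. fJ d h n J (j @ [a])) else 0)"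
    by (rule Delta_sum[OF jV])
  show ?thesis
  proof (cases "take n j = J")
    case True
    then have "length (take n j) = n" using lJ by simp
    then have ln: "length j \<ge> n" by simp
    then have jne: "j \<noteq> []" using n1 by auto
    have jnb: "j \<noteq> butlast J" using ln lJ n1 by auto
    define k where "k = h - length j"
    have fj: "fJ d h n J j = int (th d (Suc k))" using True jh by (simp add: fJ_def k_def Suc_diff_le)
    have ch: "(if length j < h then (\<Sum>a<bnd d j. fJ d h n J (j @ [a])) else 0)
        = (int d - 1) * int (th d k)"
    proof (cases "length j < h")
      case True
      have "\<And>a. fJ d h n J (j @ [a]) = int (th d k)"
        using `take n j = J` ln by (simp add: fJ_def k_def)
      then show ?thesis using True jne d by (simp add: bnd_def of_nat_diff)
    next
      case False
      then show ?thesis by (simp add: k_def)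
    qed
    have e1: "int (th d (Suc k)) = (int d - 1) * int (th d k) + 1" by (rule th_rec_int) (use d in simp)
    have e2: "int (th d (Suc (Suc k))) = (int d - 1) * int (th d (Suc k)) + 1" by (rule th_rec_int) (use d in simp)
    show ?thesis
    proof (cases "j = J")
      case True
      have "length (take n (butlast J)) < length J" using lJ n1 by simp
      then have "take n (butlast J) \<noteq> J" by (metis less_irrefl)
      then have p: "fJ d h n J (butlast j) = 0" using True by (simp add: fJ_def)
      have hk: "h + 2 - n = Suc (Suc k)" using True lJ nh by (simp add: k_def)
      have L: "(\<Sum>i\<in>tree_V d h. fJ d h n J i * tree_Delta d i j) = int d * int (th d (Suc k)) - (int d - 1) * int (th d k)"
        using S fj ch p jne by simp
      have R: "(if j = J then int (th d (h + 2 - n)) else 0) - (if j = butlast J then int (th d (h + 1 - n)) else 0) = int (th d (Suc (Suc k)))"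
        using True jnb hk by simp
      show ?thesis unfolding L R e2 e1 by (simp add: algebra_simps)
    next
      case False
      have "length j \<noteq> n" using False `take n j = J` by auto
      then have lgt: "length j > n" using ln by simp
      then have "take n (butlast j) = J" using `take n j = J` by (simp add: take_butlast)
      moreover have "h + 1 - length (butlast j) = Suc (Suc k)" using lgt jh by (simp add: k_def)
      ultimately have p: "fJ d h n J (butlast j) = int (th d (Suc (Suc k)))" by (simp add: fJ_def)
      have L: "(\<Sum>i\<in>tree_V d h. fJ d h n J i * tree_Delta d i j) = int d * int (th d (Suc k)) - int (th d (Suc (Suc k))) - (int d - 1) * int (th d k)"
        using S fj ch p jne by simp
      have R: "(if j = J then int (th d (h + 2 - n)) else 0) - (if j = butlast J then int (th d (h + 1 - n)) else 0) = 0"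
        using False jnb by simp
      show ?thesis unfolding L R e2 e1 by (simp add: algebra_simps)
    qed
  next
    case False
    have fj: "fJ d h n J j = 0" using False by (simp add: fJ_def)
    have p: "(if j \<noteq> [] then fJ d h n J (butlast j) else 0) = 0"
    proof (cases "n < length j")
      case True
      then show ?thesis using False by (simp add: fJ_def take_butlast)
    next
      case nl: False
      show ?thesis
      proof (cases "j = []")
        case False
        have "length (take n (butlast j)) < length J" using nl lJ n1 False by simp
        then have "take n (butlast j) \<noteq> J" by (metis less_irrefl)
        then show ?thesis by (simp add: fJ_def)
      qed simp
    qed
    have cj: "\<And>a. fJ d h n J (j @ [a]) = (if j @ [a] = J then int (th d (h + 1 - n)) else 0)"
    proof -
      fix a
      show "fJ d h n J (j @ [a]) = (if j @ [a] = J then int (th d (h + 1 - n)) else 0)"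
      proof (cases "n \<le> length j")
        case True
        then have "take n (j @ [a]) \<noteq> J" using False by simp
        moreover have "j @ [a] \<noteq> J" using True lJ by auto
        ultimately show ?thesis by (simp add: fJ_def)
      next
        case nl: False
        then have "take n (j @ [a]) = j @ [a]" by simp
        then show ?thesis using lJ by (auto simp: fJ_def)
      qed
    qed
    show ?thesis
    proof (cases "j = butlast J")
      case True
      have Jne: "J \<noteq> []" using lJ n1 by auto
      define l where "l = last J"
      have Jeq: "J = j @ [l]" using True Jne by (simp add: l_def)
      then have "length j < h \<and> l < bnd d j" using JV snoc_V by metis
      moreover have "\<And>a. (j @ [a] = J) = (a = l)" using Jeq by simp
      ultimately have "(if length j < h then (\<Sum>a<bnd d j. fJ d h n J (j @ [a])) else 0)
          = int (th d (h + 1 - n))" by (simp add: cj)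
      moreover have "j \<noteq> J" using Jeq by simp
      ultimately show ?thesis using S fj p True by simp
    next
      case nb: False
      have "\<And>a. j @ [a] \<noteq> J" using nb by auto
      then have "(if length j < h then (\<Sum>a<bnd d j. fJ d h n J (j @ [a])) else 0) = 0"
        by (simp add: cj)
      moreover have "j \<noteq> J" using False lJ by auto
      ultimately show ?thesis using S fj p nb by simp
    qed
  qed
qed

lemma coprime_th: "d \<ge> 1 \<Longrightarrow> coprime (th d (Suc m)) (th d m)"
proof (rule coprimeI)
  fix c assume d: "d \<ge> 1" and a: "c dvd th d (Suc m)" and b: "c dvd th d m"
  from b have b2: "c dvd (d - 1) * th d m" by simp
  from a have "c dvd (d - 1) * th d m + 1" by simp
  then have "c dvd 1" using dvd_add_right_iff[OF b2] by blast
  then show "is_unit c" by simp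
qed

theorem proposition7p6:
  fixes d h n :: nat and j1 j2 :: "nat list"
  assumes "d \<ge> 3" and "h \<ge> 1" and "1 \<le> n" and "n \<le> h"
    and "j1 \<in> tree_V d h" and "j2 \<in> tree_V d h"
    and "length j1 = n" and "length j2 = n"
    and "butlast j1 = butlast j2" and "j1 \<noteq> j2"
  shows "order_in_G d h (\<lambda>j. std_basis j1 j - std_basis j2 j) = theta d (h + 2 - n)"
proof -
  note A = assms
  let ?V = "tree_V d h"
  let ?v = "\<lambda>j. std_basis j1 j - std_basis j2 j"
  define T where "T = th d (h + 2 - n)"
  define T' where "T' = th d (h + 1 - n)"
  have TT: "T = th d (Suc (h + 1 - n))" unfolding T_def using A by (simp add: Suc_diff_le)
  have Tpos: "T > 0" unfolding TT by simp
  define y where "y = (\<lambda>u. fJ d h n j1 u - fJ d h n j2 u)"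
  have Y: "(\<Sum>i\<in>?V. y i * tree_Delta d i j) = int T * ?v j" if jV: "j \<in> ?V" for j
  proof -
    have "(\<Sum>i\<in>?V. y i * tree_Delta d i j) = (\<Sum>i\<in>?V. fJ d h n j1 i * tree_Delta d i j) - (\<Sum>i\<in>?V. fJ d h n j2 i * tree_Delta d i j)"
      unfolding y_def by (simp add: left_diff_distrib sum_subtractf)
    also have "\<dots> = int T * ?v j"
      unfolding branch[OF A(1) A(5) A(7) A(3) A(4) jV] branch[OF A(1) A(6) A(8) A(3) A(4) jV]
      using A(9) A(10) by (auto simp: std_basis_def T_def)
    finally show ?thesis .
  qed
  have PT: "0 < T \<and> (\<lambda>j. int T * ?v j) \<in> tree_lattice d h"
  proof (intro conjI Tpos)
    have "(\<lambda>j. int T * ?v j) = (\<lambda>j. if j \<in> ?V then (\<Sum>i\<in>?V. y i * tree_Delta d i j) else 0)"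
    proof
      fix j show "int T * ?v j = (if j \<in> ?V then (\<Sum>i\<in>?V. y i * tree_Delta d i j) else 0)"
        using Y A(5) A(6) by (auto simp: std_basis_def)
    qed
    then show "(\<lambda>j. int T * ?v j) \<in> tree_lattice d h" unfolding tree_lattice_def by blast
  qed
  have minT: "T \<le> k" if k: "0 < k \<and> (\<lambda>j. int k * ?v j) \<in> tree_lattice d h" for k
  proof -
    from k obtain c :: "nat list \<Rightarrow> int" where
      c: "(\<lambda>j. int k * ?v j) = (\<lambda>j. if j \<in> ?V then (\<Sum>i\<in>?V. c i * tree_Delta d i j) else 0)"
      unfolding tree_lattice_def by blast
    have C: "(\<Sum>i\<in>?V. c i * tree_Delta d i j) = int k * ?v j" if "j \<in> ?V" for j
      using fun_cong[OF c, of j] that by simp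
    define z where "z = (\<lambda>i. int T * c i - int k * y i)"
    have "\<forall>j\<in>?V. (\<Sum>i\<in>?V. z i * tree_Delta d i j) = 0"
    proof
      fix j assume jV: "j \<in> ?V"
      have "(\<Sum>i\<in>?V. z i * tree_Delta d i j) = int T * (\<Sum>i\<in>?V. c i * tree_Delta d i j) - int k * (\<Sum>i\<in>?V. y i * tree_Delta d i j)"
        unfolding z_def by (simp add: left_diff_distrib sum_subtractf sum_distrib_left mult.assoc)
      also have "\<dots> = 0" using C[OF jV] Y[OF jV] by simp
      finally show "(\<Sum>i\<in>?V. z i * tree_Delta d i j) = 0" .
    qed
    from kernel[OF A(1) this A(5)] have z1: "int T * c j1 = int k * y j1" by (simp add: z_def)
    have "take n j1 = j1" using A(7) by simp
    then have "y j1 = int T'" using A(10) by (simp add: y_def fJ_def T'_def A(7))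
    with z1 have "int T dvd int (k * T')" by (metis dvd_triv_left of_nat_mult)
    then have "T dvd k * T'" by (simp only: of_nat_dvd_iff)
    moreover have "coprime T T'" unfolding TT T'_def by (rule coprime_th) (use A(1) in simp)
    ultimately have "T dvd k" by (simp add: coprime_dvd_mult_left_iff)
    then show "T \<le> k" using k by (simp add: dvd_imp_le)
  qed
  have "order_in_G d h ?v = (LEAST k::nat. 0 < k \<and> (\<lambda>j. int k * ?v j) \<in> tree_lattice d h)"
    unfolding order_in_G_def by (rule if_P) (use PT in blast)
  also have "\<dots> = T" by (rule Least_equality) (use PT minT in auto)
  also have "T = theta d (h + 2 - n)" unfolding T_def using theta_th[OF A(1)] by simp
  finally show ?thesis .
qed
end
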